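(* Let $X$ be a complex Banach space, $\mathcal{F}$ a commutative algebra with unit, $\Phi:\mathcal{F}\to\mathcal{C}(X)$ a calculus, and $\mathcal{G}$ a unital subalgebra of $\mathcal{F}$ such that for each $g\in\mathcal{G}$ the set $\mathrm{reg}(g,\Phi)\cap\mathcal{G}$ is an anchor set. Then $\mathcal{G}$ is $\Phi$-regular, i.e., the restriction $\Phi|_{\mathcal{G}}:\mathcal{G}\to\mathcal{C}(X)$ is a calculus.
   Context: $\mathcal{L}(X)$, $\mathcal{C}(X)$: bounded, resp. closed linear operators on $X$; operator inclusions are graph inclusions, sums/products have natural domains, "$Tx=y$" means $x\in\mathrm{dom}(T)$, $Tx=y$. For a unital algebra $\mathcal{H}$, a proto-calculus is a map $\Phi:\mathcal{H}\to\mathcal{C}(X)$ with (FC1) $\Phi(\mathbf{1})=I$; (FC2) $\lambda\Phi(f)\subseteq\Phi(\lambda f)$, $\Phi(f)+\Phi(g)\subseteq\Phi(f+g)$; (FC3) $\Phi(f)\Phi(g)\subseteq\Phi(fg)$ with $\mathrm{dom}(\Phi(f)\Phi(g))=\mathrm{dom}(\Phi(g))\cap\mathrm{dom}(\Phi(fg))$. $\mathrm{bdd}(\mathcal{H},\Phi)=\{f\in\mathcal{H}:\Phi(f)\in\mathcal{L}(X)\}$, $\mathrm{reg}(f,\Phi)=\{e\in\mathcal{H}: e,ef\in\mathrm{bdd}(\mathcal{H},\Phi)\}$. A calculus is a proto-calculus such that for every $f\in\mathcal{H}$ and $x,y\in X$: $\Phi(f)x=y\iff\Phi(ef)x=\Phi(e)y$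 for all $e\in\mathrm{reg}(f,\Phi)$. A nonempty set $\mathcal{M}$ of $\Phi$-bounded elements is an anchor set if $\bigcap_{e\in\mathcal{M}}\ker\Phi(e)=\{0\}$. *)

theory Defs
  imports "HOL-Analysis.Analysis"
begin

class complex_vector = real_vector +
  fixes scaleC :: "complex \<Rightarrow> 'a \<Rightarrow> 'a" (infixr \<open>*\<^sub>C\<close> 75)
  assumes scaleC_add_right: "a *\<^sub>C (x + y) = a *\<^sub>C x + a *\<^sub>C y"
    and scaleC_add_left: "(a + b) *\<^sub>C x = a *\<^sub>C x + b *\<^sub>C x"
    and scaleC_scaleC: "a *\<^sub>C (b *\<^sub>C x) = (a * b) *\<^sub>C x"
    and scaleC_one: "1 *\<^sub>C x = x"
    and scaleR_scaleC: "scaleR r x = complex_of_real r *\<^sub>C x"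

class complex_normed_vector = complex_vector + real_normed_vector +
  assumes norm_scaleC: "norm (a *\<^sub>C x) = cmod a * norm x"

(* complex Banach spaces: complex_normed_vector + banach *)

class complex_algebra_1 = complex_vector + ring_1 +
  assumes mult_scaleC_left: "(a *\<^sub>C x) * y = a *\<^sub>C (x * y)"
    and mult_scaleC_right: "x * (a *\<^sub>C y) = a *\<^sub>C (x * y)"

section \<open>Linear operators on X, represented by their graphs\<close>

type_synonym 'x op = "('x \<times> 'x) set"

definition op_dom :: "'x op \<Rightarrow> 'x set" where
  "op_dom T = fst ` T"

definition op_ker :: "'x::zero op \<Rightarrow> 'x set" where
  "op_ker T = {x. (x, 0) \<in> T}"

definition linear_op :: "'x::complex_vector op \<Rightarrow> bool" where
  "linear_op T \<longleftrightarrow>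
     (\<forall>x y z. (x, y) \<in> T \<longrightarrow> (x, z) \<in> T \<longrightarrow> y = z) \<and>
     (0, 0) \<in> T \<and>
     (\<forall>x y u v. (x, y) \<in> T \<longrightarrow> (u, v) \<in> T \<longrightarrow> (x + u, y + v) \<in> T) \<and>
     (\<forall>c x y. (x, y) \<in> T \<longrightarrow> (c *\<^sub>C x, c *\<^sub>C y) \<in> T)"

text \<open>\<open>\<C>(X)\<close>: closed linear operators (closed graph in X \<times> X).\<close>
definition closed_op :: "'x::complex_normed_vector op \<Rightarrow> bool" where
  "closed_op T \<longleftrightarrow> linear_op T \<and> closed T"

definition bounded_op :: "'x::complex_normed_vector op \<Rightarrow> bool" where
  "bounded_op T \<longleftrightarrow> linear_op T \<and> op_dom T = UNIV \<and>
     (\<exists>C. \<forall>x y. (x, y) \<in> T \<longrightarrow> norm y \<le> C * norm x)"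

definition op_id :: "'x op" where
  "op_id = {(x, x) | x. True}"

definition op_scale :: "complex \<Rightarrow> 'x::complex_vector op \<Rightarrow> 'x op" where
  "op_scale c T = {(x, c *\<^sub>C y) | x y. (x, y) \<in> T}"

definition op_plus :: "'x::plus op \<Rightarrow> 'x op \<Rightarrow> 'x op" where
  "op_plus T S = {(x, y + z) | x y z. (x, y) \<in> T \<and> (x, z) \<in> S}"

text \<open>Product \<open>T S\<close> (first S, then T) with natural domain.\<close>
definition op_comp :: "'x op \<Rightarrow> 'x op \<Rightarrow> 'x op" where
  "op_comp T S = {(x, z) | x y z. (x, y) \<in> S \<and> (y, z) \<in> T}"

definition unital_subalgebra :: "'f::complex_algebra_1 set \<Rightarrow> bool" where
  "unital_subalgebra G \<longleftrightarrow> 1 \<in> G \<and>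
     (\<forall>a\<in>G. \<forall>b\<in>G. a + b \<in> G \<and> a * b \<in> G) \<and>
     (\<forall>c. \<forall>a\<in>G. c *\<^sub>C a \<in> G)"

definition proto_calculus ::
  "'f::complex_algebra_1 set \<Rightarrow> ('f \<Rightarrow> 'x::complex_normed_vector op) \<Rightarrow> bool" where
  "proto_calculus H \<Phi> \<longleftrightarrow>
     (\<forall>f\<in>H. closed_op (\<Phi> f)) \<and>
     \<Phi> 1 = op_id \<and>
     (\<forall>c. \<forall>f\<in>H. op_scale c (\<Phi> f) \<subseteq> \<Phi> (c *\<^sub>C f)) \<and>
     (\<forall>f\<in>H. \<forall>g\<in>H. op_plus (\<Phi> f) (\<Phi> g) \<subseteq> \<Phi> (f + g)) \<and>
     (\<forall>f\<in>H. \<forall>g\<in>H. op_comp (\<Phi> f) (\<Phi> g) \<subseteq> \<Phi> (f * g) \<and>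
        op_dom (op_comp (\<Phi> f) (\<Phi> g)) = op_dom (\<Phi> g) \<inter> op_dom (\<Phi> (f * g)))"

definition bdd :: "'f set \<Rightarrow> ('f \<Rightarrow> 'x::complex_normed_vector op) \<Rightarrow> 'f set" where
  "bdd H \<Phi> = {f \<in> H. bounded_op (\<Phi> f)}"

definition reg :: "'f::times set \<Rightarrow> 'f \<Rightarrow> ('f \<Rightarrow> 'x::complex_normed_vector op) \<Rightarrow> 'f set" where
  "reg H f \<Phi> = {e \<in> H. e \<in> bdd H \<Phi> \<and> e * f \<in> bdd H \<Phi>}"

definition calculus ::
  "'f::complex_algebra_1 set \<Rightarrow> ('f \<Rightarrow> 'x::complex_normed_vector op) \<Rightarrow> bool" where
  "calculus H \<Phi> \<longleftrightarrow> proto_calculus H \<Phi> \<and>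
     (\<forall>f\<in>H. \<forall>x y. (x, y) \<in> \<Phi> f \<longleftrightarrow>
        (\<forall>e\<in>reg H f \<Phi>. \<exists>w. (x, w) \<in> \<Phi> (e * f) \<and> (y, w) \<in> \<Phi> e))"

definition anchor_set ::
  "'f set \<Rightarrow> ('f \<Rightarrow> 'x::complex_normed_vector op) \<Rightarrow> 'f set \<Rightarrow> bool" where
  "anchor_set H \<Phi> M \<longleftrightarrow> M \<noteq> {} \<and> M \<subseteq> bdd H \<Phi> \<and>
     (\<Inter>e\<in>M. op_ker (\<Phi> e)) = {0}"

end

theory Submission
  imports Defs
begin

lemma lin_fun: "linear_op T \<Longrightarrow> (x, y) \<in> T \<Longrightarrow> (x, z) \<in> T \<Longrightarrow> y = z"
  unfolding linear_op_def by blast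

lemma lin_diff:
  assumes "linear_op T" "(a, v) \<in> T" "(b, v) \<in> T"
  shows "(a - b, 0) \<in> T"
proof -
  have "((-1) *\<^sub>C b, (-1) *\<^sub>C v) \<in> T" using assms unfolding linear_op_def by blast
  moreover have "\<And>u::'a. (-1) *\<^sub>C u = - u"
    by (metis scaleR_scaleC scaleR_minus1_left of_real_1 of_real_minus)
  ultimately have "(- b, - v) \<in> T" by simp
  hence "(a + - b, v + - v) \<in> T" using assms unfolding linear_op_def by blast
  thus ?thesis by simp
qed

lemma bdd_app: "bounded_op T \<Longrightarrow> \<exists>y. (x, y) \<in> T"
  unfolding bounded_op_def op_dom_def by force

theorem theorem5p6:
  fixes \<Phi> :: "'f::{comm_ring_1, complex_algebra_1} \<Rightarrow> 'x::{complex_normed_vector, banach} op"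
    and G :: "'f set"
  assumes "calculus UNIV \<Phi>"
    and "unital_subalgebra G"
    and "\<forall>g\<in>G. anchor_set UNIV \<Phi> (reg UNIV g \<Phi> \<inter> G)"
  shows "calculus G \<Phi>"
proof -
  have PC: "proto_calculus UNIV \<Phi>" using assms(1) unfolding calculus_def by blast
  have CU: "\<And>f x y. (x, y) \<in> \<Phi> f \<longleftrightarrow>
        (\<forall>e\<in>reg UNIV f \<Phi>. \<exists>w. (x, w) \<in> \<Phi> (e * f) \<and> (y, w) \<in> \<Phi> e)"
    using assms(1) unfolding calculus_def by blast
  have lin: "\<And>f. linear_op (\<Phi> f)" using PC unfolding proto_calculus_def closed_op_def by blast
  have comp: "\<And>f g x y z. (x, y) \<in> \<Phi> g \<Longrightarrow> (y, z) \<in> \<Phi> f \<Longrightarrow> (x, z) \<in> \<Phi> (f * g)"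
  proof -
    fix f g x y z assume "(x, y) \<in> \<Phi> g" "(y, z) \<in> \<Phi> f"
    hence "(x, z) \<in> op_comp (\<Phi> f) (\<Phi> g)" unfolding op_comp_def by blast
    thus "(x, z) \<in> \<Phi> (f * g)" using PC unfolding proto_calculus_def by blast
  qed
  have PG: "proto_calculus G \<Phi>" using PC unfolding proto_calculus_def by blast
  have regG: "\<And>f. f \<in> G \<Longrightarrow> reg G f \<Phi> = reg UNIV f \<Phi> \<inter> G"
    using assms(2) unfolding reg_def bdd_def unital_subalgebra_def by auto
  have main: "(x, y) \<in> \<Phi> f"
    if fG: "f \<in> G" and H: "\<forall>e\<in>reg UNIV f \<Phi> \<inter> G. \<exists>w. (x, w) \<in> \<Phi> (e * f) \<and> (y, w) \<in> \<Phi> e"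
    for f x y
  proof -
    have anc: "anchor_set UNIV \<Phi> (reg UNIV f \<Phi> \<inter> G)" using assms(3) fG by blast
    have "\<exists>w. (x, w) \<in> \<Phi> (d * f) \<and> (y, w) \<in> \<Phi> d" if dR: "d \<in> reg UNIV f \<Phi>" for d
    proof -
      have bd: "bounded_op (\<Phi> d)" and bdf: "bounded_op (\<Phi> (d * f))"
        using dR unfolding reg_def bdd_def by auto
      obtain a where a: "(x, a) \<in> \<Phi> (d * f)" using bdd_app[OF bdf] by blast
      obtain b where b: "(y, b) \<in> \<Phi> d" using bdd_app[OF bd] by blast
      have "a - b \<in> op_ker (\<Phi> e)" if eM: "e \<in> reg UNIV f \<Phi> \<inter> G" for e
      proof -
        have be: "bounded_op (\<Phi> e)" using eM unfolding reg_def bdd_def by auto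
        obtain w where w: "(x, w) \<in> \<Phi> (e * f)" "(y, w) \<in> \<Phi> e" using H eM by blast
        obtain u where u: "(w, u) \<in> \<Phi> d" using bdd_app[OF bd] by blast
        obtain v where v: "(a, v) \<in> \<Phi> e" using bdd_app[OF be] by blast
        obtain v' where v': "(b, v') \<in> \<Phi> e" using bdd_app[OF be] by blast
        have 1: "(x, v) \<in> \<Phi> (e * (d * f))" using comp[OF a v] .
        have 2: "(x, u) \<in> \<Phi> (d * (e * f))" using comp[OF w(1) u] .
        have "e * (d * f) = d * (e * f)" by (simp add: ac_simps)
        hence vu: "v = u" using 1 2 lin_fun[OF lin] by metis
        have 3: "(y, v') \<in> \<Phi> (e * d)" using comp[OF b v'] .
        have 4: "(y, u) \<in> \<Phi> (d * e)" using comp[OF w(2) u] .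
        have "e * d = d * e" by (simp add: ac_simps)
        hence "v' = u" using 3 4 lin_fun[OF lin] by metis
        hence "(a - b, 0) \<in> \<Phi> e" using lin_diff[OF lin] v v' vu by blast
        thus ?thesis unfolding op_ker_def by simp
      qed
      hence "a - b \<in> (\<Inter>e\<in>reg UNIV f \<Phi> \<inter> G. op_ker (\<Phi> e))" by blast
      hence "a - b = 0" using anc unfolding anchor_set_def by blast
      thus ?thesis using a b by auto
    qed
    thus ?thesis using CU by blast
  qed
  show ?thesis unfolding calculus_def
  proof (intro conjI PG ballI allI)
    fix f x y assume fG: "f \<in> G"
    show "(x, y) \<in> \<Phi> f \<longleftrightarrow> (\<forall>e\<in>reg G f \<Phi>. \<exists>w. (x, w) \<in> \<Phi> (e * f) \<and> (y, w) \<in> \<Phi> e)"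
      using CU[of x y f] main[OF fG, of x y] regG[OF fG] by blast
  qed
qed

end
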